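(* There exists no rectifying curve in $\mathbb{E}^n$ all of whose curvatures $\kappa_1,\dots,\kappa_{n-1}$ are non-zero constants.
   Context: For an arclength parameterized curve $\alpha$ in $\mathbb{E}^n$ that is $n$ times continuously differentiable, the Frenet frame $T,N,B_1,\dots,B_{n-2}$ is orthonormal and satisfies $T'=\kappa_1N$, $N'=-\kappa_1T+\kappa_2B_1$, $B_1'=-\kappa_2N+\kappa_3B_2$, $B_i'=-\kappa_{i+1}B_{i-1}+\kappa_{i+2}B_{i+1}$ for $i\in\{2,\dots,n-3\}$, $B_{n-2}'=-\kappa_{n-1}B_{n-3}$, where $\kappa_1,\dots,\kappa_{n-1}$ are the curvatures and $\kappa_1,\dots,\kappa_{n-2}>0$. A curve $\alpha$ is a rectifying curve if there is a fixed point $p$ such that for all $s$, $\langle\alpha(s)-p,N(s)\rangle=0$. *)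

theory Defs
  imports "HOL-Analysis.Analysis"
begin

text \<open>The frame is indexed by E 0 = T, E 1 = N, E (j+1) = B_j (j = 1..n-2);
  the curvatures are k 1, ..., k (n-1) (functions of the parameter s).
  The Frenet equations are written in the uniform form
  E_i' = - k_i E_(i-1) + k_(i+1) E_(i+1), with the terms k_0 and k_n absent,
  which is exactly the list T' = k1 N, N' = -k1 T + k2 B1, ..., B_(n-2)' = -k_(n-1) B_(n-3).
  Arclength parametrisation: alpha' = T with T a unit vector.\<close>

definition frenet_apparatus ::
  "(real \<Rightarrow> real^'n) \<Rightarrow> real set \<Rightarrow> (nat \<Rightarrow> real \<Rightarrow> real^'n) \<Rightarrow> (nat \<Rightarrow> real \<Rightarrow> real) \<Rightarrow> bool"
  where
  "frenet_apparatus \<alpha> I E k \<longleftrightarrow>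
     (\<forall>s\<in>I. (\<alpha> has_vector_derivative E 0 s) (at s)) \<and>
     (\<forall>s\<in>I. \<forall>i<CARD('n). \<forall>j<CARD('n). E i s \<bullet> E j s = (if i = j then 1 else 0)) \<and>
     (\<forall>s\<in>I. \<forall>i<CARD('n).
        (E i has_vector_derivative
           ((if i = 0 then 0 else - (k i s *\<^sub>R E (i - 1) s)) +
            (if i + 1 < CARD('n) then k (i + 1) s *\<^sub>R E (i + 1) s else 0))) (at s)) \<and>
     (\<forall>s\<in>I. \<forall>i\<in>{1..CARD('n) - 2}. k i s > 0)"

definition rectifying_curve ::
  "(real \<Rightarrow> real^'n) \<Rightarrow> real set \<Rightarrow> (real \<Rightarrow> real^'n) \<Rightarrow> bool"
  where
  "rectifying_curve \<alpha> I N \<longleftrightarrow> (\<exists>p. \<forall>s\<in>I. (\<alpha> s - p) \<bullet> N s = 0)"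

end

theory Submission imports Defs begin

lemma tele:
  fixes x c :: "nat \<Rightarrow> real"
  shows "(\<Sum>i<m. x i * ((if i=0 then 0 else -(c i * x (i-1))) + (if i+1<m then c (i+1) * x (i+1) else 0))) = 0"
proof (induction m)
  case 0
  then show ?case by simp
next
  case (Suc m)
  have aux: "(\<Sum>i<m. x i * ((if i=0 then 0 else -(c i * x (i-1))) + (if i+1<Suc m then c (i+1) * x (i+1) else 0)))
     = (\<Sum>i<m. x i * ((if i=0 then 0 else -(c i * x (i-1))) + (if i+1<m then c (i+1) * x (i+1) else 0)))
       + (if m = 0 then 0 else x (m-1) * c m * x m)"
  proof (cases m)
    case 0 then show ?thesis by simp
  next
    case (Suc m')
    have "(\<Sum>i<m'. x i * ((if i=0 then 0 else -(c i * x (i-1))) + (if i+1<Suc m then c (i+1) * x (i+1) else 0)))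
       = (\<Sum>i<m'. x i * ((if i=0 then 0 else -(c i * x (i-1))) + (if i+1<m then c (i+1) * x (i+1) else 0)))"
      by (rule sum.cong) (auto simp: Suc)
    then show ?thesis by (simp add: Suc algebra_simps)
  qed
  show ?case using Suc.IH aux by (simp add: algebra_simps)
qed

lemma inner_vd:
  fixes f g :: "real \<Rightarrow> 'a::real_inner"
  assumes "(f has_vector_derivative f') (at s)" "(g has_vector_derivative g') (at s)"
  shows "((\<lambda>s. f s \<bullet> g s) has_real_derivative (f' \<bullet> g s + f s \<bullet> g')) (at s)"
proof -
  have e: "(\<lambda>h. h * (f' \<bullet> g s) + h * (g' \<bullet> f s)) = (*) (f' \<bullet> g s + f s \<bullet> g')"
    by (auto simp: fun_eq_iff algebra_simps inner_commute)
  show ?thesis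
  using has_derivative_inner[OF assms[unfolded has_vector_derivative_def]]
  unfolding has_field_derivative_def
  by (simp add: algebra_simps inner_commute inner_scaleR_left inner_scaleR_right e)
qed


theorem theorem4p2:
  fixes \<alpha> :: "real \<Rightarrow> real^'n"
    and I :: "real set"
    and E :: "nat \<Rightarrow> real \<Rightarrow> real^'n"
    and k :: "nat \<Rightarrow> real \<Rightarrow> real"
  assumes "CARD('n) \<ge> 3"
    and "open I" and "is_interval I" and "I \<noteq> {}"
    and "frenet_apparatus \<alpha> I E k"
    and "\<forall>i\<in>{1..CARD('n) - 1}. \<exists>c. c \<noteq> 0 \<and> (\<forall>s\<in>I. k i s = c)"
  shows "\<not> rectifying_curve \<alpha> I (E 1)"
proof
  assume "rectifying_curve \<alpha> I (E 1)"
  then obtain p where p: "\<forall>s\<in>I. (\<alpha> s - p) \<bullet> E 1 s = 0"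
    unfolding rectifying_curve_def by blast
  define n where "n = CARD('n)"
  have n3: "n \<ge> 3" using assms(1) n_def by simp
  have da: "\<And>s. s \<in> I \<Longrightarrow> (\<alpha> has_vector_derivative E 0 s) (at s)"
    and orth: "\<And>s i j. s \<in> I \<Longrightarrow> i < n \<Longrightarrow> j < n \<Longrightarrow> E i s \<bullet> E j s = (if i = j then 1 else 0)"
    and dE: "\<And>s i. s \<in> I \<Longrightarrow> i < n \<Longrightarrow> (E i has_vector_derivative
           ((if i = 0 then 0 else - (k i s *\<^sub>R E (i - 1) s)) +
            (if i + 1 < n then k (i + 1) s *\<^sub>R E (i + 1) s else 0))) (at s)"
    using assms(5) unfolding frenet_apparatus_def n_def by auto
  obtain c where c: "\<forall>i\<in>{1..n-1}. c i \<noteq> 0 \<and> (\<forall>s\<in>I. k i s = c i)"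
    using bchoice[OF assms(6)[folded n_def]] by blast
  define g where "g i s = (\<alpha> s - p) \<bullet> E i s" for i s
  define D where "D i s = (if i = 0 then 1 else 0) + ((if i=0 then 0 else -(k i s * g (i-1) s)) + (if i+1<n then k (i+1) s * g (i+1) s else 0))" for i s
  have g1: "\<And>s. s \<in> I \<Longrightarrow> g 1 s = 0" using p g_def by simp
  have dg: "(g i has_real_derivative D i s) (at s)" if s: "s \<in> I" and i: "i < n" for i s
  proof -
    have d1: "((\<lambda>s. \<alpha> s - p) has_vector_derivative E 0 s) (at s)"
      using da[OF s] by (auto intro!: derivative_eq_intros)
    have "(g i has_real_derivative (E 0 s \<bullet> E i s + (\<alpha> s - p) \<bullet> ((if i = 0 then 0 else - (k i s *\<^sub>R E (i - 1) s)) +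
            (if i + 1 < n then k (i + 1) s *\<^sub>R E (i + 1) s else 0)))) (at s)"
      unfolding g_def[abs_def] by (rule inner_vd[OF d1 dE[OF s i]])
    moreover have "E 0 s \<bullet> E i s + (\<alpha> s - p) \<bullet> ((if i = 0 then 0 else - (k i s *\<^sub>R E (i - 1) s)) +
            (if i + 1 < n then k (i + 1) s *\<^sub>R E (i + 1) s else 0)) = D i s"
      using orth[OF s, of 0 i] i n3 unfolding D_def g_def
      by (auto simp: inner_add_right inner_minus_right)
    ultimately show ?thesis by simp
  qed
  have D0: "\<And>s. s \<in> I \<Longrightarrow> D 0 s = 1" using g1 n3 unfolding D_def by simp
  have Feven: "D i s = a" if "\<forall>s\<in>I. g i s = a * g 0 s" "i < n" "s \<in> I" for i s a
  proof -
    have "((\<lambda>s. a * g 0 s) has_real_derivative a * D 0 s) (at s)"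
      using dg[of s 0] that n3 by (auto intro!: derivative_eq_intros)
    then have "(g i has_real_derivative a) (at s)"
      using D0[OF that(3)] has_field_derivative_transform_within_open[OF _ assms(2) that(3), of "\<lambda>s. a * g 0 s" _ "g i"] that(1)
      by auto
    then show ?thesis using dg[OF that(3) that(2)] DERIV_unique by blast
  qed
  have Fodd: "D i s = 0" if "\<forall>s\<in>I. g i s = b" "i < n" "s \<in> I" for i s b
  proof -
    have "(g i has_real_derivative 0) (at s)"
      using has_field_derivative_transform_within_open[OF DERIV_const assms(2) that(3), of b "g i"] that(1)
      by auto
    then show ?thesis using dg[OF that(3) that(2)] DERIV_unique by blast
  qed
  have claim: "i < n \<longrightarrow> (even i \<longrightarrow> (\<exists>a. a\<noteq>0 \<and> (\<forall>s\<in>I. g i s = a * g 0 s))) \<and> (odd i \<longrightarrow> (\<exists>b. \<forall>s\<in>I. g i s = b))" for i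
  proof (induction i rule: less_induct)
    case (less i)
    show ?case
    proof (cases "i \<le> 1")
      case True
      then consider "i = 0" | "i = 1" by linarith
      then show ?thesis
      proof cases
        case 1 then show ?thesis by (intro impI conjI exI[of _ 1]) auto
      next
        case 2 then show ?thesis using g1 by auto
      qed
    next
      case False
      then have "i = Suc (Suc (i - 2))" by simp
      then obtain j where ij: "i = Suc (Suc j)" by blast
      show ?thesis
      proof
        assume "i < n"
        then have jn: "j + 2 < n" using ij by simp
        have c1: "c (j+1) \<noteq> 0" "\<forall>s\<in>I. k (j+1) s = c (j+1)" using c jn by auto
        have c2: "c (j+2) \<noteq> 0" "\<forall>s\<in>I. k (j+2) s = c (j+2)" using c jn by auto
        have eq: "g i s = (D (j+1) s + c (j+1) * g j s) / c (j+2)" if s: "s \<in> I" for s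
          using c1 c2 s jn unfolding D_def ij by (auto simp: field_simps numeral_2_eq_2)
        have IHj: "(even j \<longrightarrow> (\<exists>a. a\<noteq>0 \<and> (\<forall>s\<in>I. g j s = a * g 0 s))) \<and> (odd j \<longrightarrow> (\<exists>b. \<forall>s\<in>I. g j s = b))"
          using less.IH[of j] ij jn by auto
        have IHj1: "(even (j+1) \<longrightarrow> (\<exists>a. a\<noteq>0 \<and> (\<forall>s\<in>I. g (j+1) s = a * g 0 s))) \<and> (odd (j+1) \<longrightarrow> (\<exists>b. \<forall>s\<in>I. g (j+1) s = b))"
          using less.IH[of "j+1"] ij jn by auto
        show "(even i \<longrightarrow> (\<exists>a. a\<noteq>0 \<and> (\<forall>s\<in>I. g i s = a * g 0 s))) \<and> (odd i \<longrightarrow> (\<exists>b. \<forall>s\<in>I. g i s = b))"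
        proof (cases "even j")
          case True
          obtain a where a: "a \<noteq> 0" "\<forall>s\<in>I. g j s = a * g 0 s" using IHj True by auto
          obtain b where b: "\<forall>s\<in>I. g (j+1) s = b" using IHj1 True by auto
          have "\<forall>s\<in>I. g i s = (c (j+1) * a / c (j+2)) * g 0 s"
            using eq Fodd[OF b] a jn by auto
          moreover have "c (j+1) * a / c (j+2) \<noteq> 0" using a c1 c2 by auto
          ultimately have "\<exists>a. a \<noteq> 0 \<and> (\<forall>s\<in>I. g i s = a * g 0 s)" by blast
          then show ?thesis using True ij by auto
        next
          case False
          obtain b where b: "\<forall>s\<in>I. g j s = b" using IHj False by auto
          obtain a where a: "a \<noteq> 0" "\<forall>s\<in>I. g (j+1) s = a * g 0 s" using IHj1 False by auto
          have "\<forall>s\<in>I. g i s = (a + c (j+1) * b) / c (j+2)"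
            using eq Feven[OF a(2)] b jn by auto
          then show ?thesis using False ij by auto
        qed
      qed
    qed
  qed
  have "\<forall>i. \<exists>a. i < n \<longrightarrow> (even i \<longrightarrow> a \<noteq> 0 \<and> (\<forall>s\<in>I. g i s = a * g 0 s)) \<and> (odd i \<longrightarrow> (\<forall>s\<in>I. g i s = a))"
  proof
    fix i
    show "\<exists>a. i < n \<longrightarrow> (even i \<longrightarrow> a \<noteq> 0 \<and> (\<forall>s\<in>I. g i s = a * g 0 s)) \<and> (odd i \<longrightarrow> (\<forall>s\<in>I. g i s = a))"
    proof (cases "i < n")
      case True
      then show ?thesis using claim[of i] by (cases "even i") auto
    qed auto
  qed
  then obtain A where A: "\<And>i. i < n \<Longrightarrow> (even i \<longrightarrow> A i \<noteq> 0 \<and> (\<forall>s\<in>I. g i s = A i * g 0 s)) \<and> (odd i \<longrightarrow> (\<forall>s\<in>I. g i s = A i))"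
    by metis
  obtain s0 where s0: "s0 \<in> I" "g 0 s0 \<noteq> 0"
  proof -
    obtain s where s: "s \<in> I" using assms(4) by blast
    show ?thesis
    proof (rule ccontr)
      assume "\<not> ?thesis"
      then have "\<forall>t\<in>I. g 0 t = 0" using that by blast
      then have "D 0 s = 0" using Fodd[of 0 0 s] s n3 by auto
      then show False using D0[OF s] by simp
    qed
  qed
  have DA: "D i s0 = (if even i then A i else 0)" if "i < n" for i
    using A[OF that] Feven[of i "A i" s0] Fodd[of i "A i" s0] that s0 by auto
  have "(\<Sum>i<n. g i s0 * D i s0) = (\<Sum>i<n. g i s0 * (if i = 0 then 1 else 0))
      + (\<Sum>i<n. g i s0 * ((if i=0 then 0 else -(k i s0 * g (i-1) s0)) + (if i+1<n then k (i+1) s0 * g (i+1) s0 else 0)))"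
    unfolding D_def by (simp add: sum.distrib algebra_simps)
  also have "\<dots> = g 0 s0" using tele[where m=n and x="\<lambda>i. g i s0" and c="\<lambda>i. k i s0"] n3
    by (simp add: if_distrib[of "\<lambda>x. g _ s0 * x"] sum.delta cong: if_cong)
  finally have S1: "(\<Sum>i<n. g i s0 * D i s0) = g 0 s0" .
  have "(\<Sum>i<n. g i s0 * D i s0) = (\<Sum>i<n. (if even i then (A i)^2 else 0)) * g 0 s0"
    unfolding sum_distrib_right
  proof (rule sum.cong)
    fix i assume "i \<in> {..<n}"
    then have i: "i < n" by simp
    show "g i s0 * D i s0 = (if even i then (A i)^2 else 0) * g 0 s0"
    proof (cases "even i")
      case True
      then have "g i s0 = A i * g 0 s0" using A[OF i] s0(1) by blast
      then show ?thesis using DA[OF i] True by (simp add: power2_eq_square)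
    next
      case False
      then show ?thesis using DA[OF i] by simp
    qed
  qed simp
  with S1 s0 have S: "(\<Sum>i<n. (if even i then (A i)^2 else 0)) = 1" by simp
  have A0: "A 0 = 1" using A[of 0] n3 s0 by auto
  have A2: "A 2 \<noteq> 0" using A[of 2] n3 by auto
  have "(\<Sum>i\<in>{0,2}. (if even i then (A i)^2 else 0)) \<le> (\<Sum>i<n. (if even i then (A i)^2 else 0))"
    by (rule sum_mono2) (use n3 in auto)
  then have "1 + (A 2)^2 \<le> 1" using S A0 by simp
  then show False using A2 by simp
qed
end
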